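(* Let $(S,\le)$ be a dcwo, $g:S\rightharpoonup S$ a partial monotonic map, and $s\in S$. Let $G$ be the family of all elements $g^n(s)$, for those $n\in\mathbb N$ such that $g^n(s)$ is defined. Then there are finitely many directed subfamilies $G_0,G_1,\dots,G_{m-1}$ of $G$ such that: (1) $cl(G)=\bigcup_{j=0}^{m-1}cl(G_j)=\downarrow\{\bigvee G_0,\bigvee G_1,\dots,\bigvee G_{m-1}\}$; (2) each $G_j$ is either a one-element set $\{g^{p_j}(s)\}$ with $p_j\in\mathbb N$, or a chain of the form $\{g^{p_j+\ell q_j}(s)\mid \ell\in\mathbb N\}$ where $p_j\in\mathbb N$, $q_j\in\mathbb N\setminus\{0\}$ and $g^{p_j}(s)<g^{p_j+q_j}(s)$; (3) for every $j$ with $0\le j<m$, $s\not< g^{p_j}(s)$.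
   Context: A dcwo is a partial order which is well (well-founded, no infinite antichain) and a dcpo (every directed subset $D$ has a least upper bound $\bigvee D$). A partial monotonic map has an upward-closed domain and is monotone on its domain. $cl$ denotes closure in the Scott topology (open sets: upward-closed sets $U$ meeting every directed set whose lub lies in $U$). *)

theory Defs
  imports Main
begin

definition directed :: "'a::order set \<Rightarrow> bool" where
  "directed D \<longleftrightarrow> D \<noteq> {} \<and> (\<forall>x\<in>D. \<forall>y\<in>D. \<exists>z\<in>D. x \<le> z \<and> y \<le> z)"

definition is_lub :: "'a::order set \<Rightarrow> 'a \<Rightarrow> bool" where
  "is_lub D u \<longleftrightarrow> (\<forall>x\<in>D. x \<le> u) \<and> (\<forall>v. (\<forall>x\<in>D. x \<le> v) \<longrightarrow> u \<le> v)"

definition lub :: "'a::order set \<Rightarrow> 'a" where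
  "lub D = (THE u. is_lub D u)"

definition antichain :: "'a::order set \<Rightarrow> bool" where
  "antichain A \<longleftrightarrow> (\<forall>x\<in>A. \<forall>y\<in>A. x \<noteq> y \<longrightarrow> \<not> x \<le> y)"

definition well_po :: "'a::order itself \<Rightarrow> bool" where
  "well_po _ \<longleftrightarrow> wfP ((<) :: 'a \<Rightarrow> 'a \<Rightarrow> bool) \<and> (\<forall>A::'a set. antichain A \<longrightarrow> finite A)"

definition dcpo :: "'a::order itself \<Rightarrow> bool" where
  "dcpo _ \<longleftrightarrow> (\<forall>D::'a set. directed D \<longrightarrow> (\<exists>u. is_lub D u))"

definition dcwo :: "'a::order itself \<Rightarrow> bool" where
  "dcwo T \<longleftrightarrow> well_po T \<and> dcpo T"

definition up_closed :: "'a::order set \<Rightarrow> bool" where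
  "up_closed U \<longleftrightarrow> (\<forall>x y. x \<in> U \<longrightarrow> x \<le> y \<longrightarrow> y \<in> U)"

definition partial_monotonic :: "('a::order \<Rightarrow> 'a option) \<Rightarrow> bool" where
  "partial_monotonic g \<longleftrightarrow> up_closed (dom g) \<and>
     (\<forall>x y. x \<in> dom g \<longrightarrow> x \<le> y \<longrightarrow> the (g x) \<le> the (g y))"

primrec iter :: "('a \<Rightarrow> 'a option) \<Rightarrow> nat \<Rightarrow> 'a \<Rightarrow> 'a option" where
  "iter g 0 s = Some s"
| "iter g (Suc n) s = Option.bind (iter g n s) g"

definition scott_open :: "'a::order set \<Rightarrow> bool" where
  "scott_open U \<longleftrightarrow> up_closed U \<and>
     (\<forall>D. directed D \<longrightarrow> (\<exists>u. is_lub D u \<and> u \<in> U) \<longrightarrow> D \<inter> U \<noteq> {})"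

definition scott_closed :: "'a::order set \<Rightarrow> bool" where
  "scott_closed C \<longleftrightarrow> scott_open (- C)"

definition scott_cl :: "'a::order set \<Rightarrow> 'a set" where
  "scott_cl A = \<Inter>{C. scott_closed C \<and> A \<subseteq> C}"

definition downset :: "'a::order set \<Rightarrow> 'a set" where
  "downset X = {y. \<exists>x\<in>X. y \<le> x}"

end

theory Submission
  imports Defs
begin

section \<open>Scott closure facts\<close>

lemma lub_eq: "is_lub D (u::'a::order) \<Longrightarrow> lub D = u"
  unfolding lub_def
  by (rule the_equality) (auto simp: is_lub_def intro: order_antisym)

lemma lub_ex: "dcpo TYPE('a::order) \<Longrightarrow> directed (D::'a set) \<Longrightarrow> is_lub D (lub D)"
  unfolding dcpo_def using lub_eq by metis

lemma cl_sub: "scott_closed C \<Longrightarrow> A \<subseteq> C \<Longrightarrow> scott_cl A \<subseteq> C"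
  by (auto simp: scott_cl_def)

lemma cl_ext: "A \<subseteq> scott_cl A"
  by (auto simp: scott_cl_def)

lemma cl_mono: "A \<subseteq> B \<Longrightarrow> scott_cl A \<subseteq> scott_cl B"
  by (auto simp: scott_cl_def)

lemma closed_down: "scott_closed C \<Longrightarrow> x \<in> C \<Longrightarrow> y \<le> x \<Longrightarrow> y \<in> C"
  unfolding scott_closed_def scott_open_def up_closed_def by blast

lemma closed_lub: "scott_closed C \<Longrightarrow> directed D \<Longrightarrow> D \<subseteq> C \<Longrightarrow> is_lub D u \<Longrightarrow> u \<in> C"
  unfolding scott_closed_def scott_open_def by blast

lemma cl_down: "x \<in> scott_cl A \<Longrightarrow> y \<le> x \<Longrightarrow> y \<in> scott_cl A"
  unfolding scott_cl_def using closed_down by blast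

lemma cl_lub: "directed D \<Longrightarrow> D \<subseteq> A \<Longrightarrow> is_lub D u \<Longrightarrow> u \<in> scott_cl A"
  unfolding scott_cl_def using closed_lub by blast

lemma downset_fin_aux:
  assumes "finite F"
  shows "\<forall>D u. directed D \<longrightarrow> is_lub D (u::'a::order) \<longrightarrow> D \<subseteq> downset F \<longrightarrow> u \<in> downset F"
  using assms
proof (induction F rule: finite_induct)
  case empty
  then show ?case by (auto simp: downset_def directed_def)
next
  case (insert f F)
  show ?case
  proof (intro allI impI)
    fix D u assume d: "directed D" and l: "is_lub D u" and s: "D \<subseteq> downset (insert f F)"
    show "u \<in> downset (insert f F)"
    proof (cases "D \<subseteq> {y. y \<le> f}")
      case True
      then have "u \<le> f" using l by (auto simp: is_lub_def)
      then show ?thesis by (auto simp: downset_def)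
    next
      case False
      then obtain d1 where d1: "d1 \<in> D" "\<not> d1 \<le> f" by auto
      show ?thesis
      proof (cases "D \<subseteq> downset F")
        case True
        then have "u \<in> downset F" using insert.IH d l by blast
        then show ?thesis by (auto simp: downset_def)
      next
        case False
        then obtain d2 where d2: "d2 \<in> D" "d2 \<notin> downset F" by auto
        obtain d3 where d3: "d3 \<in> D" "d1 \<le> d3" "d2 \<le> d3"
          using d d1 d2 unfolding directed_def by blast
        have "d3 \<in> downset (insert f F)" using s d3 by auto
        then have "d3 \<le> f \<or> d3 \<in> downset F" by (auto simp: downset_def)
        then show ?thesis
        proof
          assume "d3 \<le> f" then show ?thesis using d1 d3 order_trans by blast
        next
          assume "d3 \<in> downset F"
          then have "d2 \<in> downset F" using d3 by (auto simp: downset_def intro: order_trans)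
          then show ?thesis using d2 by blast
        qed
      qed
    qed
  qed
qed

lemma downset_closed:
  assumes "finite (F::'a::order set)"
  shows "scott_closed (downset F)"
  unfolding scott_closed_def scott_open_def
proof (intro conjI allI impI)
  show "up_closed (- downset F)"
    unfolding up_closed_def downset_def by (auto intro: order_trans)
next
  fix D assume d: "directed D" and e: "\<exists>u. is_lub D u \<and> u \<in> - downset F"
  then obtain u where "is_lub D u" "u \<notin> downset F" by auto
  then show "D \<inter> - downset F \<noteq> {}" using downset_fin_aux[OF assms] d by blast
qed

lemma cl_main:
  fixes m :: nat
  assumes dc: "dcpo TYPE('a::order)"
  and dir: "\<forall>j<m. D j \<subseteq> (G::'a set) \<and> directed (D j)"
  and cov: "\<forall>x\<in>G. \<exists>j<m. \<exists>y\<in>D j. x \<le> y"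
  shows "scott_cl G = (\<Union>j<m. scott_cl (D j)) \<and> scott_cl G = downset {lub (D j) | j. j < m}"
proof -
  let ?U = "downset {lub (D j) | j. j < m}"
  have eq: "{lub (D j) | j. j < m} = (\<lambda>j. lub (D j)) ` {..<m}" by blast
  have fin: "finite {lub (D j) | j. j < m}" unfolding eq by (rule finite_imageI) simp
  have lubs: "is_lub (D j) (lub (D j))" if "j < m" for j using lub_ex[OF dc] dir that by simp
  have "G \<subseteq> ?U"
  proof
    fix x assume "x \<in> G"
    then obtain j y where j: "j < m" "y \<in> D j" "x \<le> y" using cov by blast
    then have "y \<le> lub (D j)" using lubs[OF j(1)] by (auto simp: is_lub_def)
    then have "x \<le> lub (D j)" using j(3) by (rule order_trans[rotated])
    then show "x \<in> ?U" using j(1) unfolding downset_def by blast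
  qed
  then have a: "scott_cl G \<subseteq> ?U" by (rule cl_sub[OF downset_closed[OF fin]])
  have b: "?U \<subseteq> (\<Union>j<m. scott_cl (D j))"
  proof
    fix y assume "y \<in> ?U"
    then obtain j where j: "j < m" "y \<le> lub (D j)" unfolding downset_def by blast
    have "directed (D j)" using dir j(1) by simp
    then have "lub (D j) \<in> scott_cl (D j)" using cl_lub[OF _ _ lubs[OF j(1)]] by blast
    then have "y \<in> scott_cl (D j)" using cl_down j(2) by blast
    then show "y \<in> (\<Union>j<m. scott_cl (D j))" using j(1) by blast
  qed
  have c: "(\<Union>j<m. scott_cl (D j)) \<subseteq> scott_cl G"
  proof (rule UN_least)
    fix j assume "j \<in> {..<m}"
    then have "D j \<subseteq> G" using dir by simp
    then show "scott_cl (D j) \<subseteq> scott_cl G" by (rule cl_mono)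
  qed
  have e1: "scott_cl G = (\<Union>j<m. scott_cl (D j))"
    by (rule subset_antisym[OF order_trans[OF a b] c])
  have e2: "scott_cl G = ?U"
    by (rule subset_antisym[OF a order_trans[OF b c]])
  show ?thesis using e1 e2 by (rule conjI)
qed

section \<open>Iterates\<close>

lemma iter_add: "iter g (n + k) s = Option.bind (iter g n s) (\<lambda>y. iter g k y)"
  by (induction k) auto

lemma iter_none: "iter g n s = None \<Longrightarrow> n \<le> k \<Longrightarrow> iter g k s = None"
  using iter_add[of g n "k - n" s] by simp

lemma iter_mono:
  assumes pm: "partial_monotonic g"
  shows "iter g k a = Some a' \<Longrightarrow> a \<le> b \<Longrightarrow> \<exists>b'. iter g k b = Some b' \<and> a' \<le> b'"
proof (induction k arbitrary: a')
  case 0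
  then show ?case by auto
next
  case (Suc k)
  then obtain a1 where a1: "iter g k a = Some a1" "g a1 = Some a'"
    by (cases "iter g k a") auto
  obtain b1 where b1: "iter g k b = Some b1" "a1 \<le> b1" using Suc.IH[OF a1(1)] Suc.prems by blast
  have "a1 \<in> dom g" using a1 by auto
  then have "b1 \<in> dom g" using pm b1 unfolding partial_monotonic_def up_closed_def by blast
  then obtain b' where b': "g b1 = Some b'" by auto
  have "the (g a1) \<le> the (g b1)" using pm b1 \<open>a1 \<in> dom g\<close> unfolding partial_monotonic_def by blast
  then show ?case using a1 b1 b' by auto
qed

lemma chain_step:
  assumes pm: "partial_monotonic g"
  and a: "iter g n s = Some a" and b: "iter g (n + q) s = Some b" and ab: "a \<le> b"
  shows "\<exists>y z. iter g (n + l * q) s = Some y \<and> iter g (n + Suc l * q) s = Some z \<and> y \<le> z"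
proof (induction l)
  case 0
  then show ?case using a b ab by auto
next
  case (Suc l)
  then obtain y z where yz: "iter g (n + l * q) s = Some y" "iter g (n + Suc l * q) s = Some z" "y \<le> z"
    by blast
  have e1: "n + Suc l * q = (n + l * q) + q" by simp
  have "iter g (n + Suc l * q) s = Option.bind (iter g (n + l * q) s) (\<lambda>y. iter g q y)"
    unfolding e1 by (rule iter_add)
  then have yq: "iter g q y = Some z" using yz by simp
  obtain w where w: "iter g q z = Some w" "z \<le> w" using iter_mono[OF pm yq yz(3)] by blast
  have e2: "n + Suc (Suc l) * q = (n + Suc l * q) + q" by simp
  have "iter g (n + Suc (Suc l) * q) s = Option.bind (iter g (n + Suc l * q) s) (\<lambda>y. iter g q y)"
    unfolding e2 by (rule iter_add)
  then have "iter g (n + Suc (Suc l) * q) s = Some w" using yz w by simp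
  then show ?case using yz w by blast
qed

lemma chain_le:
  assumes pm: "partial_monotonic g"
  and a: "iter g n s = Some a" and b: "iter g (n + q) s = Some b" and ab: "a \<le> b"
  shows "l \<le> l' \<Longrightarrow> the (iter g (n + l * q) s) \<le> the (iter g (n + l' * q) s)"
proof -
  have "the (iter g (n + l * q) s) \<le> the (iter g (n + Suc l * q) s)" for l
  proof -
    obtain y z where "iter g (n + l * q) s = Some y" "iter g (n + Suc l * q) s = Some z" "y \<le> z"
      using chain_step[OF pm a b ab, of l] by blast
    then show ?thesis by simp
  qed
  then show "l \<le> l' \<Longrightarrow> ?thesis"
    using lift_Suc_mono_le[of "\<lambda>l. the (iter g (n + l * q) s)"] by blast
qed

lemma chain_def_all:
  assumes pm: "partial_monotonic g"
  and a: "iter g n s = Some a" and b: "iter g (n + q) s = Some b" and ab: "a \<le> b"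
  shows "iter g (n + l * q) s \<noteq> None"
  using chain_step[OF pm a b ab, of l] by auto

lemma iter_period:
  assumes "iter g r s = iter g (r + q) s"
  shows "iter g (r + q + k) s = iter g (r + k) s"
  using iter_add[of g "r + q" k s] iter_add[of g r k s] assms by simp

lemma iter_period_mult:
  assumes "iter g r s = iter g (r + q) s"
  shows "iter g (r + l * q) s = iter g r s"
proof (induction l)
  case 0 then show ?case by simp
next
  case (Suc l)
  have "iter g (r + Suc l * q) s = iter g (r + q + l * q) s" by (simp add: algebra_simps)
  also have "\<dots> = iter g (r + l * q) s" by (rule iter_period[OF assms])
  finally show ?case using Suc by simp
qed

lemma dir_range:
  assumes "\<And>l l'. l \<le> l' \<Longrightarrow> (f::nat \<Rightarrow> 'a::order) l \<le> f l'"
  shows "directed (range f)"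
  unfolding directed_def
proof (intro conjI ballI)
  show "range f \<noteq> {}" by simp
next
  fix a b assume "a \<in> range f" "b \<in> range f"
  then obtain i k where "a = f i" "b = f k" by auto
  then show "\<exists>z\<in>range f. a \<le> z \<and> b \<le> z"
    using assms[of i "max i k"] assms[of k "max i k"] by auto
qed

lemma construct:
  fixes g :: "'a::order \<Rightarrow> 'a option" and s :: 'a
  assumes dc: "dcpo TYPE('a)" and pm: "partial_monotonic g"
  and q0: "(q::nat) > 0" and a: "iter g P s = Some a" and b: "iter g (P + q) s = Some b"
  and ab: "a \<le> b"
  and ns: "\<forall>n<P+q. \<not> s < the (iter g n s)"
  and Gd: "G = {x. \<exists>n. iter g n s = Some x}"
  shows "\<exists>(m::nat) (Gs :: nat \<Rightarrow> 'a set) (p :: nat \<Rightarrow> nat) (q :: nat \<Rightarrow> nat).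
     (\<forall>j<m. Gs j \<subseteq> G \<and> directed (Gs j)) \<and>
     scott_cl G = (\<Union>j<m. scott_cl (Gs j)) \<and>
     scott_cl G = downset {lub (Gs j) | j. j < m} \<and>
     (\<forall>j<m. iter g (p j) s \<noteq> None \<and>
        (Gs j = {the (iter g (p j) s)} \<or>
         (q j > 0 \<and> (\<forall>l. iter g (p j + l * q j) s \<noteq> None) \<and>
          Gs j = {the (iter g (p j + l * q j) s) | l. True} \<and>
          the (iter g (p j) s) < the (iter g (p j + q j) s)))) \<and>
     (\<forall>j<m. \<not> s < the (iter g (p j) s))"
proof -
  define x where "x n = the (iter g n s)" for n
  have alldef: "iter g n s \<noteq> None" for n
  proof
    assume N: "iter g n s = None"
    have "n * 1 \<le> n * q" using q0 by (intro mult_le_mono2) simp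
    then have "n \<le> P + n * q" by linarith
    then have "iter g (P + n * q) s = None" using iter_none[OF N] by blast
    then show False using chain_def_all[OF pm a b ab] by blast
  qed
  then have xs: "iter g n s = Some (x n)" for n unfolding x_def by auto
  have res: "x r \<le> x (r + q)" if "P \<le> r" for r
  proof -
    have "iter g r s = Option.bind (iter g P s) (\<lambda>y. iter g (r - P) y)"
      using iter_add[of g P "r - P" s] that by simp
    then have i1: "iter g (r - P) a = Some (x r)" using a xs[of r] by simp
    obtain b' where b': "iter g (r - P) b = Some b'" "x r \<le> b'" using iter_mono[OF pm i1 ab] by blast
    have "iter g (P + q + (r - P)) s = Option.bind (iter g (P + q) s) (\<lambda>y. iter g (r - P) y)"
      using iter_add[of g "P + q" "r - P" s] by simp
    then have "iter g (r + q) s = Some b'" using b b' that by (simp add: add.commute)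
    then show ?thesis using b' xs[of "r + q"] by simp
  qed
  have cle: "x (r + l * q) \<le> x (r + l' * q)" if "P \<le> r" "l \<le> l'" for r l l'
    using chain_le[OF pm xs[of r] xs[of "r + q"] res[OF that(1)] that(2)] unfolding x_def .
  define Gs where "Gs j = (if j < P then {x j} else {x (j + l * q) | l. True})" for j
  define m where "m = P + q"
  have dirs: "\<forall>j<m. Gs j \<subseteq> G \<and> directed (Gs j)"
  proof (intro allI impI conjI)
    fix j assume "j < m"
    show "Gs j \<subseteq> G" unfolding Gs_def Gd using xs by auto
    show "directed (Gs j)"
    proof (cases "j < P")
      case True then show ?thesis by (auto simp: Gs_def directed_def)
    next
      case False
      have "Gs j = range (\<lambda>l. x (j + l * q))" using False unfolding Gs_def by auto
      then show ?thesis using dir_range[of "\<lambda>l. x (j + l * q)"] cle[of j] False by simp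
    qed
  qed
  have cov: "\<forall>y\<in>G. \<exists>j<m. \<exists>z\<in>Gs j. y \<le> z"
  proof
    fix y assume "y \<in> G"
    then obtain n where n: "iter g n s = Some y" using Gd by blast
    then have yx: "y = x n" using xs[of n] by simp
    show "\<exists>j<m. \<exists>z\<in>Gs j. y \<le> z"
    proof (cases "n < P")
      case True
      then show ?thesis using yx unfolding Gs_def m_def by (intro exI[of _ n]) auto
    next
      case False
      define j where "j = P + (n - P) mod q"
      define l where "l = (n - P) div q"
      have jm: "j < m" using q0 unfolding j_def m_def by simp
      have nj: "n = j + l * q" unfolding j_def l_def using False
        by (metis add.assoc le_add_diff_inverse mod_div_mult_eq not_less)
      have "\<not> j < P" unfolding j_def by simp
      then have "Gs j = {x (j + l * q) | l. True}" unfolding Gs_def by simp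
      then have "y \<in> Gs j" using nj yx by blast
      then show ?thesis using jm by blast
    qed
  qed
  have cl: "scott_cl G = (\<Union>j<m. scott_cl (Gs j)) \<and> scott_cl G = downset {lub (Gs j) | j. j < m}"
    by (rule cl_main[OF dc dirs cov])
  have shape: "\<forall>j<m. iter g (j) s \<noteq> None \<and>
        (Gs j = {the (iter g (j) s)} \<or>
         (q > 0 \<and> (\<forall>l. iter g (j + l * q) s \<noteq> None) \<and>
          Gs j = {the (iter g (j + l * q) s) | l. True} \<and>
          the (iter g (j) s) < the (iter g (j + q) s)))"
  proof (intro allI impI conjI)
    fix j assume jm: "j < m"
    show "iter g (j) s \<noteq> None" using alldef by simp
    show "Gs j = {the (iter g (j) s)} \<or>
         (q > 0 \<and> (\<forall>l. iter g (j + l * q) s \<noteq> None) \<and>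
          Gs j = {the (iter g (j + l * q) s) | l. True} \<and>
          the (iter g (j) s) < the (iter g (j + q) s))"
    proof (cases "j < P")
      case True then show ?thesis by (simp add: Gs_def x_def)
    next
      case False
      then have le: "x j \<le> x (j + q)" using res by simp
      show ?thesis
      proof (cases "x j = x (j + q)")
        case True
        then have "iter g j s = iter g (j + q) s" using xs by metis
        then have "iter g (j + l * q) s = iter g j s" for l by (rule iter_period_mult)
        then have "x (j + l * q) = x j" for l unfolding x_def by simp
        then have "Gs j = {x j}" using False unfolding Gs_def by auto
        then show ?thesis by (simp add: x_def)
      next
        case False2: False
        then have "x j < x (j + q)" using le by simp
        then show ?thesis using q0 alldef False by (simp add: Gs_def x_def)
      qed
    qed
  qed
  have ns': "\<forall>j<m. \<not> s < the (iter g j s)" using ns unfolding m_def .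
  show ?thesis
    apply (rule exI[of _ m], rule exI[of _ Gs], rule exI[of _ "\<lambda>j. j"], rule exI[of _ "\<lambda>_. q"])
    apply (intro conjI)
    using dirs apply assumption
    using cl apply blast
    using cl apply blast
    using shape apply blast
    using ns' apply blast
    done
qed

lemma bad_seq_finite:
  fixes x :: "nat \<Rightarrow> 'a::order"
  assumes wp: "well_po TYPE('a)"
  and bad: "\<And>i j. i < j \<Longrightarrow> \<not> x i \<le> x j"
  shows False
proof -
  have wf: "wfP ((<) :: 'a \<Rightarrow> 'a \<Rightarrow> bool)" and ac: "\<And>A::'a set. antichain A \<Longrightarrow> finite A"
    using wp unfolding well_po_def by auto
  have inj: "inj x"
  proof (rule injI)
    fix i j assume e: "x i = x j"
    show "i = j"
    proof (rule ccontr)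
      assume "i \<noteq> j"
      then have "i < j \<or> j < i" by arith
      then show False
      proof
        assume "i < j" then show False using bad[of i j] e by simp
      next
        assume "j < i" then show False using bad[of j i] e by simp
      qed
    qed
  qed
  define T where "T = {i. \<forall>j>i. \<not> x j < x i}"
  have "antichain (x ` T)"
    unfolding antichain_def
  proof (intro ballI impI)
    fix a b assume "a \<in> x ` T" "b \<in> x ` T" "a \<noteq> b"
    then obtain i k where ik: "i \<in> T" "k \<in> T" "a = x i" "b = x k" "i \<noteq> k" by auto
    show "\<not> a \<le> b"
    proof
      assume ab: "a \<le> b"
      have "i < k \<or> k < i" using ik by arith
      then show False
      proof
        assume "i < k" then show False using bad[of i k] ik(3,4) ab by simp
      next
        assume "k < i"
        then have "\<not> x i < x k" using ik(2) unfolding T_def by blast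
        moreover have "x i \<le> x k" using ab ik(3,4) by simp
        moreover have "x i \<noteq> x k" using \<open>a \<noteq> b\<close> ik(3,4) by simp
        ultimately show False by (simp add: order_less_le)
      qed
    qed
  qed
  then have "finite (x ` T)" by (rule ac)
  then have "finite T" using finite_imageD inj inj_on_subset subset_UNIV by metis
  then obtain N where N: "\<forall>i\<in>T. i < N" using finite_nat_set_iff_bounded by blast
  have "x N \<in> x ` {N..}" by auto
  then obtain z where z: "z \<in> x ` {N..}" "\<forall>y. y < z \<longrightarrow> y \<notin> x ` {N..}"
    using wfp_eq_minimal[THEN iffD1, OF wf, rule_format, of "x N" "x ` {N..}"] by blast
  then obtain i where i: "N \<le> i" "z = x i" by auto
  then have "i \<notin> T" using N by auto
  then obtain j where j: "j > i" "x j < x i" unfolding T_def by auto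
  have "x j \<in> x ` {N..}" using j(1) i(1) by simp
  moreover have "x j < z" using j(2) i(2) by simp
  ultimately show False using z(2) by blast
qed

theorem lemma5p19:
  fixes g :: "'a::order \<Rightarrow> 'a option" and s :: 'a
  assumes "dcwo TYPE('a)"
    and "partial_monotonic g"
  defines "G \<equiv> {x. \<exists>n. iter g n s = Some x}"
  shows "\<exists>(m::nat) (Gs :: nat \<Rightarrow> 'a set) (p :: nat \<Rightarrow> nat) (q :: nat \<Rightarrow> nat).
     (\<forall>j<m. Gs j \<subseteq> G \<and> directed (Gs j)) \<and>
     scott_cl G = (\<Union>j<m. scott_cl (Gs j)) \<and>
     scott_cl G = downset {lub (Gs j) | j. j < m} \<and>
     (\<forall>j<m. iter g (p j) s \<noteq> None \<and>
        (Gs j = {the (iter g (p j) s)} \<or>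
         (q j > 0 \<and> (\<forall>l. iter g (p j + l * q j) s \<noteq> None) \<and>
          Gs j = {the (iter g (p j + l * q j) s) | l. True} \<and>
          the (iter g (p j) s) < the (iter g (p j + q j) s)))) \<and>
     (\<forall>j<m. \<not> s < the (iter g (p j) s))"
proof -
  have dc: "dcpo TYPE('a)" and wp: "well_po TYPE('a)" using assms(1) unfolding dcwo_def by auto
  note pm = assms(2)
  have Gd: "G = {x. \<exists>n. iter g n s = Some x}" unfolding G_def ..
  define x where "x n = the (iter g n s)" for n
  have defd: "iter g n s \<noteq> None" if "iter g k s \<noteq> None" "n \<le> k" for n k
  proof
    assume "iter g n s = None"
    from iter_none[OF this that(2)] that(1) show False by simp
  qed
  show ?thesis
  proof (cases "\<exists>n. n > 0 \<and> iter g n s \<noteq> None \<and> s \<le> x n")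
    case True
    define q where "q = (LEAST n. n > 0 \<and> iter g n s \<noteq> None \<and> s \<le> x n)"
    have q: "q > 0 \<and> iter g q s \<noteq> None \<and> s \<le> x q"
      unfolding q_def by (rule LeastI_ex[OF True])
    have qmin: "\<not> (n > 0 \<and> iter g n s \<noteq> None \<and> s \<le> x n)" if "n < q" for n
      using not_less_Least[OF that[unfolded q_def]] unfolding q_def .
    obtain b where b: "iter g (0 + q) s = Some b" using q by auto
    have xb: "s \<le> b" using q b unfolding x_def by simp
    have ns: "\<forall>n<0+q. \<not> s < the (iter g n s)"
    proof (intro allI impI)
      fix n assume n: "n < 0 + q"
      show "\<not> s < the (iter g n s)"
      proof (cases "n = 0")
        case True then show ?thesis by simp
      next
        case False
        have "iter g n s \<noteq> None" using defd[of q n] q n by simp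
        show ?thesis
        proof
          assume "s < the (iter g n s)"
          then have "s \<le> x n" unfolding x_def by simp
          then show False using qmin[of n] n False \<open>iter g n s \<noteq> None\<close> by simp
        qed
      qed
    qed
    have a0: "iter g 0 s = Some s" by simp
    have qp: "q > 0" using q by blast
    show ?thesis by (rule construct[OF dc pm qp a0 b xb ns Gd])
  next
    case False1: False
    show ?thesis
    proof (cases "\<exists>i j. i < j \<and> iter g j s \<noteq> None \<and> x i \<le> x j")
      case True
      then obtain i j where ij: "i < j" "iter g j s \<noteq> None" "x i \<le> x j" by blast
      have "iter g i s \<noteq> None" using defd[of j i] ij by simp
      then obtain a where a: "iter g i s = Some a" by auto
      have ji: "i + (j - i) = j" using ij by simp
      obtain b where b: "iter g (i + (j - i)) s = Some b" using ij(2) unfolding ji by auto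
      have ab: "a \<le> b" using ij a b unfolding x_def by simp
      have ns: "\<forall>n<i + (j - i). \<not> s < the (iter g n s)"
      proof (intro allI impI)
        fix n assume n: "n < i + (j - i)"
        show "\<not> s < the (iter g n s)"
        proof (cases "n = 0")
          case True then show ?thesis by simp
        next
          case False
          have "iter g n s \<noteq> None" using defd[of j n] ij n by simp
          show ?thesis
          proof
            assume "s < the (iter g n s)"
            then have "s \<le> x n" unfolding x_def by simp
            then show False using False1 False \<open>iter g n s \<noteq> None\<close> by blast
          qed
        qed
      qed
      have "j - i > 0" using ij by simp
      then show ?thesis by (rule construct[OF dc pm _ a b ab ns Gd])
    next
      case False
      have "\<exists>n. iter g n s = None"
      proof (rule ccontr)
        assume "\<not> (\<exists>n. iter g n s = None)"
        then have nn: "\<And>j. iter g j s \<noteq> None" by simp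
        have "\<not> x i \<le> x j" if "i < j" for i j
          using False nn[of j] that by blast
        then show False using bad_seq_finite[OF wp, of x] by blast
      qed
      define m where "m = (LEAST n. iter g n s = None)"
      have mN: "iter g m s = None" unfolding m_def by (rule LeastI_ex) fact
      have md: "iter g j s \<noteq> None" if "j < m" for j
        using not_less_Least[OF that[unfolded m_def]] unfolding m_def .
      define Gs where "Gs j = {x j}" for j
      have dirs: "\<forall>j<m. Gs j \<subseteq> G \<and> directed (Gs j)"
        using md unfolding Gs_def Gd directed_def x_def by auto
      have cov: "\<forall>y\<in>G. \<exists>j<m. \<exists>z\<in>Gs j. y \<le> z"
      proof
        fix y assume "y \<in> G"
        then obtain n where n: "iter g n s = Some y" using Gd by blast
        have "n < m"
        proof (rule ccontr)
          assume "\<not> n < m"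
          then have "iter g n s = None" using iter_none[OF mN] by simp
          then show False using n by simp
        qed
        moreover have "y \<in> Gs n" using n unfolding Gs_def x_def by simp
        ultimately show "\<exists>j<m. \<exists>z\<in>Gs j. y \<le> z" by blast
      qed
      have cl: "scott_cl G = (\<Union>j<m. scott_cl (Gs j)) \<and> scott_cl G = downset {lub (Gs j) | j. j < m}"
        by (rule cl_main[OF dc dirs cov])
      have ns: "\<forall>j<m. \<not> s < the (iter g j s)"
      proof (intro allI impI)
        fix j assume j: "j < m"
        show "\<not> s < the (iter g j s)"
        proof (cases "j = 0")
          case True then show ?thesis by simp
        next
          case False2: False
          show ?thesis
          proof
            assume "s < the (iter g j s)"
            then have "x 0 \<le> x j" unfolding x_def by simp
            then show False using False md[OF j] False2 by blast
          qed
        qed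
      qed
      show ?thesis
        apply (rule exI[of _ m], rule exI[of _ Gs], rule exI[of _ "\<lambda>j. j"], rule exI[of _ "\<lambda>_. 0"])
        apply (intro conjI)
        using dirs apply assumption
        using cl apply blast
        using cl apply blast
        using md apply (simp add: Gs_def x_def)
        using ns apply blast
        done
    qed
  qed
qed

end
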